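(* Let $\alpha,\beta,\gamma>0$ and set $\Omega=[0,1]$. For $x\in(0,1)$ and $y\in[0,1]$ define $$f(x,y)=-\left(\frac{1}{x(1-x)}\right)^{\gamma}-\alpha\exp\bigl(-\beta(x-y)\bigr),$$ and for a Borel probability measure $\mu$ on $[0,1]$ define the payoff $\varphi(x;\mu)=\int_{[0,1]} f(x,y)\,\mu(dy)$ for $x\in(0,1)$, with $\varphi(0;\mu)=\varphi(1;\mu)=-\infty$. Then the equation $$\frac{d}{dx}\left(\frac{1}{x(1-x)}\right)^{\gamma}=\alpha\beta$$ has a unique solution $x=\hat{x}\in(0,1)$. Moreover, the Dirac measure $\delta_{\{x=\hat x\}}$ is a pure Nash equilibrium of the game with payoff $\varphi$, i.e. $\hat x\in\arg\max_{x\in[0,1]}\varphi(x;\delta_{\{x=\hat x\}})$, and it is the only pure Nash equilibrium: if $z\in[0,1]$ satisfies $z\in\arg\max_{x\in[0,1]}\varphi(x;\delta_{\{x=z\}})$, then $z=\hat x$.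
   Context: This is a population game on the action space $\Omega=[0,1]$: a distribution of actions of agents is a Borel probability measure $\mu$ on $\Omega$, and an agent choosing action $x$ receives payoff $\varphi(x;\mu)$. A pure Nash equilibrium is a Dirac measure $\delta_{\{x=z\}}$ concentrated at a point $z\in\Omega$ such that $z$ maximizes $x\mapsto\varphi(x;\delta_{\{x=z\}})$ over $\Omega$. *)

theory Defs
  imports "HOL-Probability.Probability"
begin

definition Omega :: "real measure" where
  "Omega = restrict_space borel {0..1}"

definition f_pay :: "real \<Rightarrow> real \<Rightarrow> real \<Rightarrow> real \<Rightarrow> real \<Rightarrow> real" where
  "f_pay \<alpha> \<beta> \<gamma> x y = - ((1 / (x * (1 - x))) powr \<gamma>) - \<alpha> * exp (- \<beta> * (x - y))"

definition phi :: "real \<Rightarrow> real \<Rightarrow> real \<Rightarrow> real \<Rightarrow> real measure \<Rightarrow> ereal" where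
  "phi \<alpha> \<beta> \<gamma> x \<mu> = (if 0 < x \<and> x < 1 then ereal (\<integral>y. f_pay \<alpha> \<beta> \<gamma> x y \<partial>\<mu>) else - \<infinity>)"

definition pure_NE :: "(real \<Rightarrow> real measure \<Rightarrow> ereal) \<Rightarrow> real \<Rightarrow> bool" where
  "pure_NE \<phi> z \<longleftrightarrow> z \<in> {0..1} \<and>
     (\<forall>x\<in>{0..1}. \<phi> x (return Omega z) \<le> \<phi> z (return Omega z))"

end

theory Submission
  imports Defs
begin

definition Dg :: "real \<Rightarrow> real \<Rightarrow> real" where
  "Dg \<gamma> x = \<gamma> * (2*x-1) * (x*(1-x)) powr (-\<gamma>-1)"

lemma G_deriv:
  assumes "0 < x" "x < 1"
  shows "((\<lambda>x. (1 / (x * (1 - x))) powr \<gamma>) has_real_derivative Dg \<gamma> x) (at x)"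
proof -
  have h: "x*(1-x) > 0" using assms by simp
  have d1: "((\<lambda>x. 1 / (x * (1 - x))) has_real_derivative (2*x-1)/(x*(1-x))^2) (at x)"
    using h by (auto intro!: derivative_eq_intros simp: field_simps power2_eq_square)
  have "((\<lambda>x. (1 / (x * (1 - x))) powr \<gamma>) has_real_derivative
      \<gamma> * (1 / (x * (1 - x))) powr (\<gamma> - of_nat 1) * ((2*x-1)/(x*(1-x))^2)) (at x)"
    by (rule DERIV_fun_powr[OF d1]) (use h in simp)
  moreover have "\<gamma> * (1 / (x * (1 - x))) powr (\<gamma> - of_nat 1) * ((2*x-1)/(x*(1-x))^2) = Dg \<gamma> x"
  proof -
    have e1: "(1 / (x * (1 - x))) powr (\<gamma> - 1) = (x*(1-x)) powr (1 - \<gamma>)"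
      using h by (simp add: powr_divide powr_minus_divide[symmetric])
    have e2: "(x*(1-x)) powr (1 - \<gamma>) / (x*(1-x))^2 = (x*(1-x)) powr (-\<gamma>-1)"
    proof -
      have "(x*(1-x))^2 = (x*(1-x)) powr 2" using h by (simp add: powr_realpow)
      moreover have "(x*(1-x)) powr (1-\<gamma>) / (x*(1-x)) powr 2 = (x*(1-x)) powr (1-\<gamma>-2)"
        by (simp only: powr_diff)
      moreover have "1-\<gamma>-2 = -\<gamma>-1" by simp
      ultimately show ?thesis by simp
    qed
    have "\<gamma> * (1 / (x * (1 - x))) powr (\<gamma> - of_nat 1) * ((2*x-1)/(x*(1-x))^2)
       = \<gamma> * (2*x-1) * ((x*(1-x)) powr (1 - \<gamma>) / (x*(1-x))^2)" by (simp only: e1 of_nat_1 times_divide_eq_right mult_ac)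
    also have "\<dots> = Dg \<gamma> x" unfolding Dg_def e2 by simp
    finally show ?thesis .
  qed
  ultimately show ?thesis by simp
qed

lemma Dg_deriv:
  assumes "0 < x" "x < 1" "\<gamma> > 0"
  shows "\<exists>y. DERIV (Dg \<gamma>) x :> y \<and> y > 0"
proof -
  have h: "x*(1-x) > 0" using assms by simp
  have "DERIV (Dg \<gamma>) x :> \<gamma> * (2 * (x*(1-x)) powr (-\<gamma>-1) + (2*x-1) * ((-\<gamma>-1) * (x*(1-x)) powr (-\<gamma>-1-1) * (1-2*x)))"
    unfolding Dg_def using h
    by (auto intro!: derivative_eq_intros DERIV_fun_powr simp: algebra_simps)
  moreover have "\<gamma> * (2 * (x*(1-x)) powr (-\<gamma>-1) + (2*x-1) * ((-\<gamma>-1) * (x*(1-x)) powr (-\<gamma>-1-1) * (1-2*x))) > 0"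
  proof -
    have a: "(x*(1-x)) powr (-\<gamma>-1) > 0" "(x*(1-x)) powr (-\<gamma>-1-1) > 0" using h by auto
    have "(2*x-1) * ((-\<gamma>-1) * (x*(1-x)) powr (-\<gamma>-1-1) * (1-2*x)) = (\<gamma>+1) * (2*x-1)^2 * (x*(1-x)) powr (-\<gamma>-1-1)"
      by (simp add: power2_eq_square algebra_simps)
    also have "\<dots> \<ge> 0" using a assms by simp
    finally have s: "(2*x-1) * ((-\<gamma>-1) * (x*(1-x)) powr (-\<gamma>-1-1) * (1-2*x)) \<ge> 0" .
    have "2 * (x*(1-x)) powr (-\<gamma>-1) + (2*x-1) * ((-\<gamma>-1) * (x*(1-x)) powr (-\<gamma>-1-1) * (1-2*x)) > 0"
      using s a(1) by linarith
    then show ?thesis using assms by simp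
  qed
  ultimately show ?thesis by blast
qed

lemma Dg_mono:
  assumes "0 < x" "x < y" "y < 1" "\<gamma> > 0"
  shows "Dg \<gamma> x < Dg \<gamma> y"
  by (rule DERIV_pos_imp_increasing[OF assms(2)]) (rule Dg_deriv, use assms in auto)

lemma Dg_cont:
  assumes "0 < a" "b < 1" "\<gamma> > 0"
  shows "continuous_on {a..b} (Dg \<gamma>)"
proof (rule continuous_at_imp_continuous_on, intro ballI)
  fix x assume "x \<in> {a..b}"
  then obtain y where "DERIV (Dg \<gamma>) x :> y" using Dg_deriv[of x \<gamma>] assms by auto
  then show "isCont (Dg \<gamma>) x" by (rule DERIV_isCont)
qed

lemma Dg_half: "Dg \<gamma> (1/2) = 0" by (simp add: Dg_def)

lemma Dg_big:
  assumes "\<alpha> > 0" "\<beta> > 0" "\<gamma> > 0"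
  defines "t \<equiv> min (1/4) (\<gamma> / (4*\<alpha>*\<beta>))"
  shows "Dg \<gamma> (1 - t) \<ge> \<alpha> * \<beta>"
proof -
  have t: "0 < t" "t \<le> 1/4" "t \<le> \<gamma> / (4*\<alpha>*\<beta>)" using assms by (auto simp: t_def)
  define H where "H = (1 - t) * t"
  have H1: "0 < H" "H \<le> t" using t by (auto simp: H_def mult_le_cancel_right1)
  have H: "0 < H" "H \<le> t" "H \<le> 1" using H1 t by auto
  have "Dg \<gamma> (1 - t) = \<gamma> * (1 - 2*t) * H powr (-\<gamma>-1)"
    by (simp add: Dg_def H_def algebra_simps)
  have p: "H powr (-\<gamma>-1) \<ge> H powr (-1)" by (rule powr_mono') (use H assms in auto)
  have q: "H powr (-1) = 1 / H" using H by (simp add: powr_minus_divide)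
  have r: "1 / H \<ge> 1 / t" using H t by (simp add: frac_le)
  have "\<gamma> * (1 - 2*t) \<ge> \<gamma> / 2" using t assms(1-3) by simp
  have "t * (4*\<alpha>*\<beta>) \<le> \<gamma>" using t(3) assms(1-3) by (simp add: le_divide_eq)
  hence "\<alpha> * \<beta> \<le> \<gamma> / (4 * t)"
    using t(1) by (simp add: le_divide_eq algebra_simps)
  also have "\<dots> \<le> (\<gamma> / 2) * (1 / t)" using t assms(1-3) by (simp add: field_simps)
  also have "\<dots> \<le> \<gamma> * (1 - 2*t) * H powr (-\<gamma>-1)"
    apply (rule mult_mono)
    using p q r t H assms(1-3) \<open>\<gamma> * (1 - 2*t) \<ge> \<gamma> / 2\<close> by auto
  finally show ?thesis using \<open>Dg \<gamma> (1 - t) = _\<close> by simp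
qed

lemma phi_ret:
  assumes "z \<in> {0..1}"
  shows "phi \<alpha> \<beta> \<gamma> x (return Omega z) = (if 0 < x \<and> x < 1 then ereal (f_pay \<alpha> \<beta> \<gamma> x z) else - \<infinity>)"
proof -
  have sp: "space Omega = {0..1}" by (simp add: Omega_def space_restrict_space)
  have m: "f_pay \<alpha> \<beta> \<gamma> x \<in> borel_measurable Omega"
    unfolding f_pay_def Omega_def by (intro measurable_restrict_space1) measurable
  show ?thesis unfolding phi_def using integral_return[of z Omega, OF _ m] sp assms by simp
qed

lemma F_deriv:
  assumes "0 < x" "x < 1"
  shows "((\<lambda>x. f_pay \<alpha> \<beta> \<gamma> x c) has_real_derivative (- Dg \<gamma> x + \<alpha> * \<beta> * exp (- \<beta> * (x - c)))) (at x)"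
proof -
  have "((\<lambda>x. - ((1 / (x * (1 - x))) powr \<gamma>) - \<alpha> * exp (- \<beta> * (x - c))) has_real_derivative
     (- Dg \<gamma> x - \<alpha> * (exp (- \<beta> * (x - c)) * (- \<beta> * (1 - 0))))) (at x)"
    by (intro DERIV_diff DERIV_minus G_deriv[OF assms] DERIV_cmult DERIV_fun_exp DERIV_cmult DERIV_diff DERIV_ident DERIV_const)
  then show ?thesis unfolding f_pay_def by (simp add: algebra_simps)
qed

lemma F_max:
  assumes "\<alpha> > 0" "\<beta> > 0" "\<gamma> > 0" "0 < c" "c < 1" "Dg \<gamma> c = \<alpha> * \<beta>" "0 < x" "x < 1"
  shows "f_pay \<alpha> \<beta> \<gamma> x c \<le> f_pay \<alpha> \<beta> \<gamma> c c"
proof (cases x c rule: linorder_cases)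
  case less
  obtain \<xi> where \<xi>: "x < \<xi>" "\<xi> < c" and eq: "f_pay \<alpha> \<beta> \<gamma> c c - f_pay \<alpha> \<beta> \<gamma> x c
      = (c - x) * (- Dg \<gamma> \<xi> + \<alpha> * \<beta> * exp (- \<beta> * (\<xi> - c)))"
  proof -
    have "\<exists>z. x < z \<and> z < c \<and> f_pay \<alpha> \<beta> \<gamma> c c - f_pay \<alpha> \<beta> \<gamma> x c
      = (c - x) * (- Dg \<gamma> z + \<alpha> * \<beta> * exp (- \<beta> * (z - c)))"
      by (rule MVT2[OF less]) (rule F_deriv, use assms in auto)
    then show ?thesis using that by blast
  qed
  have "Dg \<gamma> \<xi> < \<alpha> * \<beta>" using Dg_mono[of \<xi> c \<gamma>] \<xi> assms by auto
  moreover have "\<beta> * (\<xi> - c) < 0" using \<xi> assms by (simp add: mult_pos_neg)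
  hence "exp (- \<beta> * (\<xi> - c)) > 1" by simp
  hence "\<alpha> * \<beta> * exp (- \<beta> * (\<xi> - c)) > \<alpha> * \<beta>" using assms by simp
  ultimately have "0 \<le> (c - x) * (- Dg \<gamma> \<xi> + \<alpha> * \<beta> * exp (- \<beta> * (\<xi> - c)))"
    using less by (intro mult_nonneg_nonneg) auto
  then show ?thesis using eq by simp
next
  case equal then show ?thesis by simp
next
  case greater
  obtain \<xi> where \<xi>: "c < \<xi>" "\<xi> < x" and eq: "f_pay \<alpha> \<beta> \<gamma> x c - f_pay \<alpha> \<beta> \<gamma> c c
      = (x - c) * (- Dg \<gamma> \<xi> + \<alpha> * \<beta> * exp (- \<beta> * (\<xi> - c)))"
  proof -
    have "\<exists>z. c < z \<and> z < x \<and> f_pay \<alpha> \<beta> \<gamma> x c - f_pay \<alpha> \<beta> \<gamma> c c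
      = (x - c) * (- Dg \<gamma> z + \<alpha> * \<beta> * exp (- \<beta> * (z - c)))"
      by (rule MVT2[OF greater]) (rule F_deriv, use assms in auto)
    then show ?thesis using that by blast
  qed
  have "Dg \<gamma> \<xi> > \<alpha> * \<beta>" using Dg_mono[of c \<xi> \<gamma>] \<xi> assms by auto
  moreover have "exp (- \<beta> * (\<xi> - c)) < 1" using \<xi> assms by simp
  hence "\<alpha> * \<beta> * exp (- \<beta> * (\<xi> - c)) < \<alpha> * \<beta>" using assms by simp
  ultimately have "(x - c) * (- Dg \<gamma> \<xi> + \<alpha> * \<beta> * exp (- \<beta> * (\<xi> - c))) \<le> 0"
    using greater by (intro mult_nonneg_nonpos) auto
  then show ?thesis using eq by simp
qed

lemma F_crit:
  assumes "0 < c" "c < 1" "\<forall>x. 0 < x \<and> x < 1 \<longrightarrow> f_pay \<alpha> \<beta> \<gamma> x c \<le> f_pay \<alpha> \<beta> \<gamma> c c"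
  shows "Dg \<gamma> c = \<alpha> * \<beta>"
proof -
  have "- Dg \<gamma> c + \<alpha> * \<beta> * exp (- \<beta> * (c - c)) = 0"
  proof (rule DERIV_local_max[OF F_deriv[OF assms(1,2)]])
    show "0 < min c (1 - c)" using assms by simp
    show "\<forall>y. \<bar>c - y\<bar> < min c (1 - c) \<longrightarrow> f_pay \<alpha> \<beta> \<gamma> y c \<le> f_pay \<alpha> \<beta> \<gamma> c c"
      using assms(3) by (auto simp: abs_if split: if_splits)
  qed
  then show ?thesis by simp
qed


theorem mainTheorem1:
  fixes \<alpha> \<beta> \<gamma> :: real
  assumes "\<alpha> > 0" and "\<beta> > 0" and "\<gamma> > 0"
  shows "\<exists>xh. xh \<in> {0<..<1}
     \<and> ((\<lambda>x. (1 / (x * (1 - x))) powr \<gamma>) has_real_derivative (\<alpha> * \<beta>)) (at xh)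
     \<and> (\<forall>x\<in>{0<..<1}. ((\<lambda>x. (1 / (x * (1 - x))) powr \<gamma>) has_real_derivative (\<alpha> * \<beta>)) (at x) \<longrightarrow> x = xh)
     \<and> pure_NE (phi \<alpha> \<beta> \<gamma>) xh
     \<and> (\<forall>z. pure_NE (phi \<alpha> \<beta> \<gamma>) z \<longrightarrow> z = xh)"
proof -
  define t where "t = min (1/4) (\<gamma> / (4*\<alpha>*\<beta>))"
  have t: "0 < t" "t \<le> 1/4" using assms by (auto simp: t_def)
  have big: "Dg \<gamma> (1 - t) \<ge> \<alpha> * \<beta>" unfolding t_def by (rule Dg_big[OF assms])
  have "\<exists>x. 1/2 \<le> x \<and> x \<le> 1 - t \<and> Dg \<gamma> x = \<alpha> * \<beta>"
  proof (rule IVT')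
    show "Dg \<gamma> (1/2) \<le> \<alpha> * \<beta>" using Dg_half[of \<gamma>] assms by simp
    show "\<alpha> * \<beta> \<le> Dg \<gamma> (1 - t)" by (rule big)
    show "1/2 \<le> 1 - t" using t by simp
    show "continuous_on {1/2..1 - t} (Dg \<gamma>)" by (rule Dg_cont) (use t assms in auto)
  qed
  then obtain xh where xh0: "1/2 \<le> xh" "xh \<le> 1 - t" and D: "Dg \<gamma> xh = \<alpha> * \<beta>" by blast
  have "xh \<noteq> 1/2"
  proof
    assume "xh = 1/2"
    hence "\<alpha> * \<beta> = 0" using D Dg_half[of \<gamma>] by metis
    thus False using assms by simp
  qed
  hence xh: "0 < xh" "xh < 1" using xh0 t by auto
  have uniq: "x = xh" if "0 < x" "x < 1" "Dg \<gamma> x = \<alpha> * \<beta>" for x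
    using Dg_mono[of x xh \<gamma>] Dg_mono[of xh x \<gamma>] that xh D assms
    by (cases x xh rule: linorder_cases) auto
  have xhin: "xh \<in> {0..1}" using xh by auto
  have ne: "pure_NE (phi \<alpha> \<beta> \<gamma>) xh"
    unfolding pure_NE_def
  proof (intro conjI ballI)
    show "xh \<in> {0..1}" using xh by auto
    fix x :: real assume "x \<in> {0..1}"
    show "phi \<alpha> \<beta> \<gamma> x (return Omega xh) \<le> phi \<alpha> \<beta> \<gamma> xh (return Omega xh)"
    proof (cases "0 < x \<and> x < 1")
      case True
      then show ?thesis using xh F_max[OF assms xh D, of x] by (simp add: phi_ret[OF xhin])
    next
      case False
      then have "phi \<alpha> \<beta> \<gamma> x (return Omega xh) = - \<infinity>" by (simp add: phi_ret[OF xhin])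
      then show ?thesis by simp
    qed
  qed
  have only: "z = xh" if "pure_NE (phi \<alpha> \<beta> \<gamma>) z" for z
  proof -
    have z: "z \<in> {0..1}" and le: "\<forall>x\<in>{0..1}. phi \<alpha> \<beta> \<gamma> x (return Omega z) \<le> phi \<alpha> \<beta> \<gamma> z (return Omega z)"
      using that unfolding pure_NE_def by auto
    have z01: "0 < z \<and> z < 1"
    proof (rule ccontr)
      assume "\<not> (0 < z \<and> z < 1)"
      hence "phi \<alpha> \<beta> \<gamma> z (return Omega z) = - \<infinity>" using phi_ret[OF z] by simp
      moreover have "phi \<alpha> \<beta> \<gamma> (1/2) (return Omega z) \<noteq> - \<infinity>" using phi_ret[OF z] by simp
      ultimately show False using le[rule_format, of "1/2"] by auto
    qed
    have "\<forall>x. 0 < x \<and> x < 1 \<longrightarrow> f_pay \<alpha> \<beta> \<gamma> x z \<le> f_pay \<alpha> \<beta> \<gamma> z z"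
    proof (intro allI impI)
      fix x :: real assume x: "0 < x \<and> x < 1"
      then have "x \<in> {0..1}" by auto
      then show "f_pay \<alpha> \<beta> \<gamma> x z \<le> f_pay \<alpha> \<beta> \<gamma> z z"
      proof -
        have "phi \<alpha> \<beta> \<gamma> x (return Omega z) \<le> phi \<alpha> \<beta> \<gamma> z (return Omega z)" using le \<open>x \<in> {0..1}\<close> by blast
        then show ?thesis using phi_ret[OF z, of \<alpha> \<beta> \<gamma> x] phi_ret[OF z, of \<alpha> \<beta> \<gamma> z] x z01 by simp
      qed
    qed
    then have "Dg \<gamma> z = \<alpha> * \<beta>" using F_crit z01 by blast
    then show ?thesis using uniq z01 by blast
  qed
  show ?thesis
  proof (intro exI conjI ballI impI allI)
    show "xh \<in> {0<..<1}" using xh by auto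
    show "((\<lambda>x. (1 / (x * (1 - x))) powr \<gamma>) has_real_derivative (\<alpha> * \<beta>)) (at xh)"
      using G_deriv[OF xh, of \<gamma>] D by simp
    fix x assume "x \<in> {0<..<1}" "((\<lambda>x. (1 / (x * (1 - x))) powr \<gamma>) has_real_derivative (\<alpha> * \<beta>)) (at x)"
    then have x: "0 < x" "x < 1" by auto
    have "Dg \<gamma> x = \<alpha> * \<beta>" by (rule DERIV_unique[OF G_deriv[OF x]]) fact
    then show "x = xh" using uniq x by blast
  next
    show "pure_NE (phi \<alpha> \<beta> \<gamma>) xh" by (rule ne)
  next
    fix z assume "pure_NE (phi \<alpha> \<beta> \<gamma>) z" then show "z = xh" by (rule only)
  qed
qed

end
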